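(* Let $n\ge3$, $0<\epsilon<1$, and define $\alpha,\beta,\gamma,\delta$ and the polynomial $Q(\rho)$ as in the context. If $\epsilon>0$ is sufficiently small, then: (1) $Q(1) = Q'(1) = 0$ and $Q''(1) = 2$; (2) $Q(\epsilon) = 0$ and $Q'(\epsilon) = \epsilon^{n-2}(1-\epsilon)$.
   Context: $D(\epsilon) = -n\epsilon^{n+2} + (n+2)\epsilon^{n+1} + n - (n+2)\epsilon$, $N(\epsilon) = -n\epsilon^{n+1} + (n+1)\epsilon^n - 1$, $K(\epsilon) = -1 + \frac{n+1}{n-1}\epsilon - \epsilon^{n-1} + \frac{n-3}{n-1}\epsilon^n$, $M(\epsilon) = \frac{\epsilon^{n+1}-1}{n(n+1)} + \frac{\epsilon-\epsilon^n}{n(n-1)}$; $\delta = \Big(\epsilon^{n-2}(1-\epsilon) - \frac{(n+2)N K}{D} + \frac{n(n-3)}{n-1}\epsilon^{n-1} - (n-1)\epsilon^{n-2} + \frac{n+1}{n-1}\Big)\Big(\frac{(n+2)N}{D}M + \frac{-(n-1)\epsilon^n + n\epsilon^{n-1}-1}{n(n-1)}\Big)^{-1}$, $\gamma = n(n+1)(n+2)(M\delta + K)/D$, $\alpha = -1 - \frac{\delta}{n(n+1)} - \frac{\gamma}{(n+1)(n+2)}$, $\beta = \frac{n+1}{n-1} + \frac{\delta}{n(n-1)} + \frac{\gamma}{n(n+1)}$ (denominators are nonzero for small $\epsilon$); $P(\rho) = -\frac{2n+\delta}{n(n-1)} + \frac{(\delta-\gamma)\rho}{n(n+1)} + \frac{\gamma\rho^2}{(n+1)(n+2)}$,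 $Q(\rho) = \rho^{n-1} - \rho^n - \rho^nP(\rho) - \alpha - \beta\rho$. *)

theory Defs
  imports "HOL-Analysis.Analysis"
begin

definition Dq :: "nat \<Rightarrow> real \<Rightarrow> real" where
  "Dq n e = - real n * e ^ (n + 2) + (real n + 2) * e ^ (n + 1) + real n - (real n + 2) * e"

definition Nq :: "nat \<Rightarrow> real \<Rightarrow> real" where
  "Nq n e = - real n * e ^ (n + 1) + (real n + 1) * e ^ n - 1"

definition Kq :: "nat \<Rightarrow> real \<Rightarrow> real" where
  "Kq n e = -1 + (real n + 1) / (real n - 1) * e - e ^ (n - 1) + (real n - 3) / (real n - 1) * e ^ n"

definition Mq :: "nat \<Rightarrow> real \<Rightarrow> real" where
  "Mq n e = (e ^ (n + 1) - 1) / (real n * (real n + 1)) + (e - e ^ n) / (real n * (real n - 1))"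

definition deltaq :: "nat \<Rightarrow> real \<Rightarrow> real" where
  "deltaq n e =
     (e ^ (n - 2) * (1 - e) - (real n + 2) * Nq n e * Kq n e / Dq n e
       + real n * (real n - 3) / (real n - 1) * e ^ (n - 1)
       - (real n - 1) * e ^ (n - 2) + (real n + 1) / (real n - 1))
     * inverse ((real n + 2) * Nq n e / Dq n e * Mq n e
       + (- (real n - 1) * e ^ n + real n * e ^ (n - 1) - 1) / (real n * (real n - 1)))"

definition gammaq :: "nat \<Rightarrow> real \<Rightarrow> real" where
  "gammaq n e = real n * (real n + 1) * (real n + 2) * (Mq n e * deltaq n e + Kq n e) / Dq n e"

definition alphaq :: "nat \<Rightarrow> real \<Rightarrow> real" where
  "alphaq n e = -1 - deltaq n e / (real n * (real n + 1)) - gammaq n e / ((real n + 1) * (real n + 2))"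

definition betaq :: "nat \<Rightarrow> real \<Rightarrow> real" where
  "betaq n e = (real n + 1) / (real n - 1) + deltaq n e / (real n * (real n - 1))
               + gammaq n e / (real n * (real n + 1))"

definition Pq :: "nat \<Rightarrow> real \<Rightarrow> real \<Rightarrow> real" where
  "Pq n e \<rho> = - (2 * real n + deltaq n e) / (real n * (real n - 1))
      + (deltaq n e - gammaq n e) * \<rho> / (real n * (real n + 1))
      + gammaq n e * \<rho>\<^sup>2 / ((real n + 1) * (real n + 2))"

definition Qq :: "nat \<Rightarrow> real \<Rightarrow> real \<Rightarrow> real" where
  "Qq n e \<rho> = \<rho> ^ (n - 1) - \<rho> ^ n - \<rho> ^ n * Pq n e \<rho> - alphaq n e - betaq n e * \<rho>"

end

theory Submission
  imports Defs
begin

definition Denq :: "nat \<Rightarrow> real \<Rightarrow> real" where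
  "Denq n e = (real n + 2) * Nq n e / Dq n e * Mq n e
       + (- (real n - 1) * e ^ n + real n * e ^ (n - 1) - 1) / (real n * (real n - 1))"

definition Numq :: "nat \<Rightarrow> real \<Rightarrow> real" where
  "Numq n e = e ^ (n - 2) * (1 - e) - (real n + 2) * Nq n e * Kq n e / Dq n e
       + real n * (real n - 3) / (real n - 1) * e ^ (n - 1)
       - (real n - 1) * e ^ (n - 2) + (real n + 1) / (real n - 1)"

lemma delta_eq: "deltaq n e = Numq n e / Denq n e"
  unfolding deltaq_def Numq_def Denq_def by (simp add: divide_inverse)

lemma c1:
  fixes x p e d g :: real
  assumes "x \<noteq> 0" "x - 1 \<noteq> 0" "x + 1 \<noteq> 0" "x + 2 \<noteq> 0"
  shows "p*e - p*e^2 - p*e^2*(-(2*x+d)/(x*(x-1)) + (d-g)*e/(x*(x+1)) + g*e^2/((x+1)*(x+2)))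
     - (-1 - d/(x*(x+1)) - g/((x+1)*(x+2))) - ((x+1)/(x-1) + d/(x*(x-1)) + g/(x*(x+1)))*e
   = (-x*(p*e^4) + (x+2)*(p*e^3) + x - (x+2)*e) * g / (x*(x+1)*(x+2))
     - (-1 + (x+1)/(x-1)*e - p*e + (x-3)/(x-1)*(p*e^2))
     - ((p*e^3-1)/(x*(x+1)) + (e-p*e^2)/(x*(x-1))) * d"
  using assms apply (simp add: divide_simps del: mult_minus_left)
  apply (simp add: algebra_simps power2_eq_square power3_eq_cube power4_eq_xxxx)
  done

lemma c2:
  fixes x p e d g D M K :: real
  assumes "x \<noteq> 0" "x - 1 \<noteq> 0" "x + 1 \<noteq> 0" "x + 2 \<noteq> 0" "D \<noteq> 0"
  shows "(x-1)*p - x*(p*e) - (x*(p*e)*(-(2*x+d)/(x*(x-1)) + (d-g)*e/(x*(x+1)) + g*e^2/((x+1)*(x+2)))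
          + p*e^2*((d-g)/(x*(x+1)) + 2*(g/((x+1)*(x+2)))*e))
        - ((x+1)/(x-1) + d/(x*(x-1)) + g/(x*(x+1))) - p*(1-e)
   = d*((x+2)*(-x*(p*e^3) + (x+1)*(p*e^2) - 1)/D*M + (-(x-1)*(p*e^2) + x*(p*e) - 1)/(x*(x-1)))
     - (p*(1-e) - (x+2)*(-x*(p*e^3) + (x+1)*(p*e^2) - 1)*K/D + x*(x-3)/(x-1)*(p*e) - (x-1)*p + (x+1)/(x-1))
     + (-x*(p*e^3) + (x+1)*(p*e^2) - 1)/(x*(x+1)) * (g - x*(x+1)*(x+2)*(M*d+K)/D)"
  using assms apply (simp add: divide_simps del: mult_minus_left)
  apply (simp add: algebra_simps power2_eq_square power3_eq_cube power4_eq_xxxx)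
  done

lemma genQe:
  fixes x p e d g D M K A B C a b :: real
  assumes nz: "x \<noteq> 0" "x - 1 \<noteq> 0" "x + 1 \<noteq> 0" "x + 2 \<noteq> 0" and Dn: "D \<noteq> 0"
    and A: "A = -(2*x+d)/(x*(x-1))" and B: "B = (d-g)/(x*(x+1))" and C: "C = g/((x+1)*(x+2))"
    and a: "a = -1 - d/(x*(x+1)) - g/((x+1)*(x+2))"
    and b: "b = (x+1)/(x-1) + d/(x*(x-1)) + g/(x*(x+1))"
    and D: "D = -x*(p*e^4) + (x+2)*(p*e^3) + x - (x+2)*e"
    and M: "M = (p*e^3-1)/(x*(x+1)) + (e-p*e^2)/(x*(x-1))"
    and K: "K = -1 + (x+1)/(x-1)*e - p*e + (x-3)/(x-1)*(p*e^2)"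
    and hg: "g = x*(x+1)*(x+2)*(M*d+K)/D"
  shows "p*e - (1+A)*(p*e^2) - B*(p*e^3) - C*(p*e^4) - a - b*e = 0"
proof -
  have "p*e - (1+A)*(p*e^2) - B*(p*e^3) - C*(p*e^4) - a - b*e
     = p*e - p*e^2 - p*e^2*(-(2*x+d)/(x*(x-1)) + (d-g)*e/(x*(x+1)) + g*e^2/((x+1)*(x+2)))
     - (-1 - d/(x*(x+1)) - g/((x+1)*(x+2))) - ((x+1)/(x-1) + d/(x*(x-1)) + g/(x*(x+1)))*e"
    unfolding A B C a b by (simp add: algebra_simps power2_eq_square power3_eq_cube power4_eq_xxxx)
  also have "\<dots> = D * g / (x*(x+1)*(x+2)) - K - M * d"
    unfolding D K M by (rule c1[OF nz])
  also have "\<dots> = 0" using Dn nz unfolding hg by (simp add: divide_simps)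
  finally show ?thesis .
qed

lemma genQ1e:
  fixes x p e d g D M K A B C b N :: real
  assumes nz: "x \<noteq> 0" "x - 1 \<noteq> 0" "x + 1 \<noteq> 0" "x + 2 \<noteq> 0" and Dn: "D \<noteq> 0"
    and A: "A = -(2*x+d)/(x*(x-1))" and B: "B = (d-g)/(x*(x+1))" and C: "C = g/((x+1)*(x+2))"
    and b: "b = (x+1)/(x-1) + d/(x*(x-1)) + g/(x*(x+1))"
    and N: "N = -x*(p*e^3) + (x+1)*(p*e^2) - 1"
    and hd: "d * ((x+2)*N/D*M + (-(x-1)*(p*e^2) + x*(p*e) - 1)/(x*(x-1)))
       = p*(1-e) - (x+2)*N*K/D + x*(x-3)/(x-1)*(p*e) - (x-1)*p + (x+1)/(x-1)"
    and hg: "g = x*(x+1)*(x+2)*(M*d+K)/D"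
  shows "(x-1)*p - x*(1+A)*(p*e) - (x+1)*B*(p*e^2) - (x+2)*C*(p*e^3) - b = p*(1-e)"
proof -
  have "(x-1)*p - x*(1+A)*(p*e) - (x+1)*B*(p*e^2) - (x+2)*C*(p*e^3) - b - p*(1-e)
     = (x-1)*p - x*(p*e) - (x*(p*e)*(-(2*x+d)/(x*(x-1)) + (d-g)*e/(x*(x+1)) + g*e^2/((x+1)*(x+2)))
          + p*e^2*((d-g)/(x*(x+1)) + 2*(g/((x+1)*(x+2)))*e))
        - ((x+1)/(x-1) + d/(x*(x-1)) + g/(x*(x+1))) - p*(1-e)"
    unfolding A B C b using nz by (simp add: divide_simps) (simp add: algebra_simps power2_eq_square power3_eq_cube)
  also have "\<dots> = d*((x+2)*N/D*M + (-(x-1)*(p*e^2) + x*(p*e) - 1)/(x*(x-1)))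
     - (p*(1-e) - (x+2)*N*K/D + x*(x-3)/(x-1)*(p*e) - (x-1)*p + (x+1)/(x-1))
     + N/(x*(x+1)) * (g - x*(x+1)*(x+2)*(M*d+K)/D)"
    unfolding N by (rule c2[OF nz Dn])
  also have "\<dots> = 0" unfolding hd using hg by simp
  finally show ?thesis by simp
qed

lemma gen1:
  fixes x d g A B C a b :: real
  assumes nz: "x \<noteq> 0" "x - 1 \<noteq> 0" "x + 1 \<noteq> 0" "x + 2 \<noteq> 0"
    and A: "A = -(2*x+d)/(x*(x-1))" and B: "B = (d-g)/(x*(x+1))" and C: "C = g/((x+1)*(x+2))"
    and a: "a = -1 - d/(x*(x+1)) - g/((x+1)*(x+2))"
    and b: "b = (x+1)/(x-1) + d/(x*(x-1)) + g/(x*(x+1))"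
  shows "1 - (1+A) - B - C - a - b = 0"
    and "(x-1) - x*(1+A) - (x+1)*B - (x+2)*C - b = 0"
    and "(x-1)*(x-2) - x*(x-1)*(1+A) - (x+1)*x*B - (x+2)*(x+1)*C = 2"
  using nz unfolding A B C a b
  by (simp_all add: divide_simps) (simp_all add: algebra_simps)

lemma Qq_expand:
  fixes n k :: nat
  assumes k: "n = k + 2"
  shows "Qq n e = (\<lambda>y. y^(k+1) - (1 + (- (2 * real n + deltaq n e) / (real n * (real n - 1))))*y^(k+2)
      - ((deltaq n e - gammaq n e) / (real n * (real n + 1)))*y^(k+3)
      - (gammaq n e / ((real n + 1) * (real n + 2)))*y^(k+4) - alphaq n e - betaq n e * y)"
proof
  fix y :: real
  have e1: "n - 1 = k + 1" using k by simp
  have pw: "y^n = y^k*y^2" "y^(k+1) = y^k*y" "y^(k+2) = y^k*y^2" "y^(k+3) = y^k*y^3" "y^(k+4) = y^k*y^4"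
    by (simp_all only: k power_add power_one_right)
  show "Qq n e y = y^(k+1) - (1 + (- (2 * real n + deltaq n e) / (real n * (real n - 1))))*y^(k+2)
      - ((deltaq n e - gammaq n e) / (real n * (real n + 1)))*y^(k+3)
      - (gammaq n e / ((real n + 1) * (real n + 2)))*y^(k+4) - alphaq n e - betaq n e * y"
    unfolding Qq_def Pq_def e1 pw
    by (simp add: algebra_simps power2_eq_square power3_eq_cube power4_eq_xxxx)
qed


lemma lemma4p7_fixed:
  fixes n :: nat and e :: real
  assumes n3: "n \<ge> 3" and Dn: "Dq n e \<noteq> 0" and Denn: "Denq n e \<noteq> 0"
  shows "Qq n e 1 = 0 \<and> deriv (Qq n e) 1 = 0 \<and> (deriv ^^ 2) (Qq n e) 1 = 2 \<and>
           Qq n e e = 0 \<and> deriv (Qq n e) e = e ^ (n - 2) * (1 - e)"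
proof -
  define k where "k = n - 2"
  have k: "n = k + 2" using n3 unfolding k_def by simp
  define x where "x = real n"
  define d where "d = deltaq n e"
  define g where "g = gammaq n e"
  define A where "A = - (2 * real n + deltaq n e) / (real n * (real n - 1))"
  define B where "B = (deltaq n e - gammaq n e) / (real n * (real n + 1))"
  define C where "C = gammaq n e / ((real n + 1) * (real n + 2))"
  define a where "a = alphaq n e"
  define b where "b = betaq n e"
  define p where "p = e ^ k"
  have nz: "x \<noteq> 0" "x - 1 \<noteq> 0" "x + 1 \<noteq> 0" "x + 2 \<noteq> 0" using n3 unfolding x_def by auto
  have QE: "Qq n e = (\<lambda>y. y^(k+1) - (1 + A)*y^(k+2) - B*y^(k+3) - C*y^(k+4) - a - b * y)"
    unfolding A_def B_def C_def a_def b_def by (rule Qq_expand[OF k])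
  define Q1 where "Q1 = (\<lambda>y::real. (x - 1)*y^k - x*(1+A)*y^(k+1) - (x+1)*B*y^(k+2) - (x+2)*C*y^(k+3) - b)"
  have rk: "real k = x - 2" using k unfolding x_def by simp
  have dQ: "(Qq n e has_real_derivative Q1 y) (at y)" for y
    unfolding QE Q1_def
    apply (rule derivative_eq_intros refl)+
    apply (simp add: rk algebra_simps)
    done
  have dQ': "deriv (Qq n e) = Q1" using dQ DERIV_imp_deriv by blast
  have dQ1: "(Q1 has_real_derivative ((x - 1)*(x-2) - x*(x-1)*(1+A) - (x+1)*x*B - (x+2)*(x+1)*C)) (at 1)"
    unfolding Q1_def
    apply (rule derivative_eq_intros refl)+
    apply (simp add: rk algebra_simps)
    done
  have hA: "A = -(2*x+d)/(x*(x-1))" by (simp add: A_def x_def d_def)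
  have hB: "B = (d-g)/(x*(x+1))" by (simp add: B_def x_def d_def g_def)
  have hC: "C = g/((x+1)*(x+2))" by (simp add: C_def x_def g_def)
  have ha: "a = -1 - d/(x*(x+1)) - g/((x+1)*(x+2))" by (simp add: a_def alphaq_def x_def d_def g_def)
  have hb: "b = (x+1)/(x-1) + d/(x*(x-1)) + g/(x*(x+1))" by (simp add: b_def betaq_def x_def d_def g_def)
  note G1 = gen1[OF nz hA hB hC ha hb]
  have pw: "e^k = p" "e^(k+1) = p*e" "e^(k+2) = p*e^2" "e^(k+3) = p*e^3" "e^(k+4) = p*e^4"
    by (simp_all only: p_def power_add power_one_right)
  have pwn: "e^(n-2) = p" "e^(n-1) = p*e" "e^n = p*e^2" "e^(n+1) = p*e^3" "e^(n+2) = p*e^4"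
  proof -
    have ne: "n-2 = k" "n-1 = k+1" "n+1 = k+3" "n+2 = k+4" using k by simp_all
    show "e^(n-2) = p" "e^(n-1) = p*e" "e^(n+1) = p*e^3" "e^(n+2) = p*e^4"
      by (simp_all only: ne pw)
    show "e^n = p*e^2" by (subst k, rule pw(3))
  qed
  have hD: "Dq n e = -x*(p*e^4) + (x+2)*(p*e^3) + x - (x+2)*e"
    unfolding Dq_def pwn x_def by simp
  have hM: "Mq n e = (p*e^3-1)/(x*(x+1)) + (e-p*e^2)/(x*(x-1))"
    unfolding Mq_def pwn x_def by simp
  have hK: "Kq n e = -1 + (x+1)/(x-1)*e - p*e + (x-3)/(x-1)*(p*e^2)"
    unfolding Kq_def pwn x_def by simp
  have hN: "Nq n e = -x*(p*e^3) + (x+1)*(p*e^2) - 1"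
    unfolding Nq_def pwn x_def by simp
  have hg: "g = x*(x+1)*(x+2)*(Mq n e*d+Kq n e)/Dq n e"
    unfolding g_def gammaq_def x_def d_def ..
  have hd: "d * ((x+2)*Nq n e/Dq n e*Mq n e + (-(x-1)*(p*e^2) + x*(p*e) - 1)/(x*(x-1)))
       = p*(1-e) - (x+2)*Nq n e*Kq n e/Dq n e + x*(x-3)/(x-1)*(p*e) - (x-1)*p + (x+1)/(x-1)"
  proof -
    have "d * Denq n e = Numq n e" unfolding d_def delta_eq using Denn by simp
    then show ?thesis unfolding Denq_def Numq_def pwn x_def .
  qed
  have Qe: "Qq n e e = 0"
    unfolding QE pw using genQe[OF nz Dn hA hB hC ha hb hD hM hK hg] by simp
  have Q1e: "Q1 e = e ^ (n - 2) * (1 - e)"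
    unfolding Q1_def pw pwn using genQ1e[OF nz Dn hA hB hC hb hN hd hg] by simp
  have d2: "(deriv ^^ 2) (Qq n e) 1 = 2"
    using DERIV_imp_deriv[OF dQ1] G1(3) by (simp add: numeral_2_eq_2 dQ')
  have Q1: "Qq n e 1 = 0" using G1(1) by (simp add: QE)
  have Q11: "deriv (Qq n e) 1 = 0" using G1(2) by (simp add: dQ' Q1_def)
  show ?thesis
    using Qe Q1e d2 Q1 Q11 by (simp add: dQ')
qed

lemma Den0: assumes n3: "n \<ge> 3" shows "Denq n 0 \<noteq> 0"
proof -
  have "Denq n 0 = (real n+2)/(real n * (real n*(real n+1))) - 1/(real n*(real n - 1))"
    using n3 by (simp add: Denq_def Nq_def Dq_def Mq_def power_0_left) (simp add: divide_simps)
  also have "\<dots> \<noteq> 0"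
  proof
    assume "(real n+2)/(real n * (real n*(real n+1))) - 1/(real n*(real n - 1)) = 0"
    then have "(real n+2) * (real n - 1) = real n * (real n + 1)"
      using n3 by (simp add: divide_simps split: if_splits)
    then show False by (simp add: algebra_simps)
  qed
  finally show ?thesis .
qed

lemma ev_nz: assumes n3: "n \<ge> 3"
  shows "\<forall>\<^sub>F e in at_right 0. Dq n e \<noteq> 0 \<and> Denq n e \<noteq> 0"
proof -
  have D0: "Dq n 0 = real n" using n3 by (simp add: Dq_def)
  have c1: "isCont (\<lambda>e. Dq n e) 0" unfolding Dq_def by (intro continuous_intros)
  have c2: "isCont (\<lambda>e. Denq n e) 0" unfolding Denq_def
    using n3 D0 by (auto intro!: continuous_intros simp: Nq_def Dq_def Mq_def)
  have t1: "((\<lambda>e. Dq n e) \<longlongrightarrow> Dq n 0) (at_right 0)"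
    using c1 unfolding isCont_def by (rule tendsto_mono[OF at_le[OF subset_UNIV], rotated])
  have t2: "((\<lambda>e. Denq n e) \<longlongrightarrow> Denq n 0) (at_right 0)"
    using c2 unfolding isCont_def by (rule tendsto_mono[OF at_le[OF subset_UNIV], rotated])
  have "\<forall>\<^sub>F e in at_right 0. Dq n e \<noteq> 0"
    using tendsto_imp_eventually_ne[OF t1] D0 n3 by simp
  moreover have "\<forall>\<^sub>F e in at_right 0. Denq n e \<noteq> 0"
    using tendsto_imp_eventually_ne[OF t2 Den0[OF n3]] .
  ultimately show ?thesis by (rule eventually_conj)
qed

theorem lemma4p7:
  fixes n :: nat
  assumes "n \<ge> 3"
  shows "\<exists>e0>0. \<forall>e. 0 < e \<and> e < 1 \<and> e < e0 \<longrightarrow>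
           Qq n e 1 = 0 \<and> deriv (Qq n e) 1 = 0 \<and> (deriv ^^ 2) (Qq n e) 1 = 2 \<and>
           Qq n e e = 0 \<and> deriv (Qq n e) e = e ^ (n - 2) * (1 - e)"
proof -
  obtain b where b: "b > 0" "\<forall>y>0. y < b \<longrightarrow> Dq n y \<noteq> 0 \<and> Denq n y \<noteq> 0"
    using ev_nz[OF assms] unfolding eventually_at_right_field by auto
  show ?thesis
    using b lemma4p7_fixed[OF assms] by blast
qed

end
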